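(* Let $F$ be a violating edge set and let $(\mathcal{T},\mathcal{M},y)$ be a tree embedding of $(G,\tilde x)$ that is good for $F$. Let $(A,B)\in Z_F$ and let $S\subseteq V(\mathcal{T})$ be such that all leaves corresponding to $A$ lie in $S$ and all leaves corresponding to $B$ lie in $V(\mathcal{T})\setminus S$. Then $y\big(\delta_{\mathcal{T}\setminus\mathcal{M}^{-1}(F)}(S)\big)\ge\frac{1}{4(p+q)\beta}$.
   Context: Setting: $G=(V,E)$ is an undirected graph with edges partitioned into safe edges $\mathcal{S}$ and unsafe edges; $p,q$ are nonnegative integers with $p+q\ge1$; $(s_i,t_i)$, $i\in[k]$, are terminal pairs; $H\subseteq E$ is such that every pair is $(p,q)$-flex-connected in $H$ (every cut $\delta_H(S)$ separating $s_i$ from $t_i$ has at least $p$ safe edges or at least $p+q$ edges). A set $S\subseteq V$ is violated if it separates some pair, $|\delta_H(S)|=p+q$ and $|\delta_H(S)\cap\mathcal{S}|<p$; a violating edge set is $F=\delta_H(S)$ for a violated $S$. Let $\beta\ge1$. Let $x:E\setminus H\to[0,1]$ satisfy $x(\delta_{E\setminus H}(S))\ge1$ for every violated $S$, and assume $0<x_e<\frac{1}{4(p+q)\beta}$ for every $e\in E\setminus H$. Define capacities $\tilde x_e=\frac{1}{4(p+q)\beta}$ for $e\in H$ and $\tilde x_e=x_e$ for $e\in E\setminus H$. A tree embedding of $(G,\tilde x)$ is a tree $\mathcal{T}$ with $\mathcal{M}_1:V(\mathcal{T})\to V$ restricting to a bijection between leaves and $V$ (we identify vertices with leaves), and $\mathcal{M}_2$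 mapping each tree edge $(a,b)$ to a path in $G$ between $\mathcal{M}_1(a),\mathcal{M}_1(b)$; capacities $y(f)=\tilde x(\delta_G(A'))$ with $A'$ the vertex set of leaves in one component of $\mathcal{T}-f$; $\mathcal{M}^{-1}(F)=\{f:\mathcal{M}_2(f)\cap F\ne\emptyset\}$; good for $F$ means $y(\mathcal{M}^{-1}(F))\le\frac12$. $\delta_{\mathcal{T}\setminus\mathcal{M}^{-1}(F)}(S)$ denotes tree edges not in $\mathcal{M}^{-1}(F)$ with exactly one endpoint in $S$. $\mathcal{Q}_F$ is the set of components of $(V,H\setminus F)$; $Q_{s_i},Q_{t_i}$ contain $s_i,t_i$; $Q\in\mathcal{Q}_F$ is shattered if its leaves are not all in one component of $\mathcal{T}-\mathcal{M}^{-1}(F)$; disjoint $A,B$ partition the shattered components if each shattered component lies in $A$ or in $B$; $Z_F=\{(A\cup Q_{s_i},B\cup Q_{t_i}):(A,B)\text{ partitions the shattered components},i\in[k]\}$. *)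

theory Defs
  imports Complex_Main
begin

text \<open>Undirected (multi)graphs are given by an edge set Es of an abstract edge type
  together with an endpoint map ends (ends e = {u,w}; a loop has ends e = {u}).\<close>

definition cut :: "'e set \<Rightarrow> ('e \<Rightarrow> 'v set) \<Rightarrow> 'v set \<Rightarrow> 'e set" where
  "cut Es ends S = {e \<in> Es. ends e \<inter> S \<noteq> {} \<and> ends e - S \<noteq> {}}"

definition adj :: "'e set \<Rightarrow> ('e \<Rightarrow> 'v set) \<Rightarrow> ('v \<times> 'v) set" where
  "adj Es ends = {(u, w). \<exists>e\<in>Es. ends e = {u, w}}"

definition comp_of :: "'e set \<Rightarrow> ('e \<Rightarrow> 'v set) \<Rightarrow> 'v \<Rightarrow> 'v set" where
  "comp_of Es ends v = {w. (v, w) \<in> (adj Es ends)\<^sup>*}"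

definition components :: "'v set \<Rightarrow> 'e set \<Rightarrow> ('e \<Rightarrow> 'v set) \<Rightarrow> 'v set set" where
  "components V Es ends = comp_of Es ends ` V"

definition separates :: "'v set \<Rightarrow> 'v \<Rightarrow> 'v \<Rightarrow> bool" where
  "separates S s t \<longleftrightarrow> (s \<in> S) \<noteq> (t \<in> S)"

definition flex_connected ::
  "'v set \<Rightarrow> 'e set \<Rightarrow> ('e \<Rightarrow> 'v set) \<Rightarrow> 'e set \<Rightarrow> nat \<Rightarrow> nat \<Rightarrow> 'v \<Rightarrow> 'v \<Rightarrow> bool" where
  "flex_connected V H ends Safe p q s t \<longleftrightarrow>
     (\<forall>S. S \<subseteq> V \<and> separates S s t \<longrightarrow>
        card (cut H ends S \<inter> Safe) \<ge> p \<or> card (cut H ends S) \<ge> p + q)"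

definition violated ::
  "'v set \<Rightarrow> 'e set \<Rightarrow> ('e \<Rightarrow> 'v set) \<Rightarrow> 'e set \<Rightarrow> nat \<Rightarrow> nat \<Rightarrow> nat \<Rightarrow>
   (nat \<Rightarrow> 'v) \<Rightarrow> (nat \<Rightarrow> 'v) \<Rightarrow> 'v set \<Rightarrow> bool" where
  "violated V H ends Safe p q k s t S \<longleftrightarrow>
     S \<subseteq> V \<and> (\<exists>i\<in>{1..k}. separates S (s i) (t i)) \<and>
     card (cut H ends S) = p + q \<and> card (cut H ends S \<inter> Safe) < p"

definition violating_edge_set ::
  "'v set \<Rightarrow> 'e set \<Rightarrow> ('e \<Rightarrow> 'v set) \<Rightarrow> 'e set \<Rightarrow> nat \<Rightarrow> nat \<Rightarrow> nat \<Rightarrow>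
   (nat \<Rightarrow> 'v) \<Rightarrow> (nat \<Rightarrow> 'v) \<Rightarrow> 'e set \<Rightarrow> bool" where
  "violating_edge_set V H ends Safe p q k s t F \<longleftrightarrow>
     (\<exists>S. violated V H ends Safe p q k s t S \<and> F = cut H ends S)"

text \<open>A tree: finite, nonempty, connected, and acyclic (every edge is a bridge,
  i.e. removing it disconnects its endpoints; this excludes cycles and parallel edges).\<close>
definition is_tree :: "'n set \<Rightarrow> 'f set \<Rightarrow> ('f \<Rightarrow> 'n set) \<Rightarrow> bool" where
  "is_tree N TE tends \<longleftrightarrow>
     finite N \<and> N \<noteq> {} \<and> finite TE \<and>
     (\<forall>f\<in>TE. tends f \<subseteq> N \<and> card (tends f) = 2) \<and>
     (\<forall>a\<in>N. \<forall>b\<in>N. (a, b) \<in> (adj TE tends)\<^sup>*) \<and>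
     (\<forall>f\<in>TE. \<forall>a b. tends f = {a, b} \<longrightarrow> (a, b) \<notin> (adj (TE - {f}) tends)\<^sup>*)"

definition leaves :: "'n set \<Rightarrow> 'f set \<Rightarrow> ('f \<Rightarrow> 'n set) \<Rightarrow> 'n set" where
  "leaves N TE tends = {a \<in> N. card {f \<in> TE. a \<in> tends f} \<le> 1}"

definition is_path :: "'e set \<Rightarrow> ('e \<Rightarrow> 'v set) \<Rightarrow> 'v \<Rightarrow> 'v \<Rightarrow> 'e list \<Rightarrow> bool" where
  "is_path E ends u w es \<longleftrightarrow>
     (\<exists>vs. length vs = Suc (length es) \<and> hd vs = u \<and> last vs = w \<and> distinct vs \<and>
        (\<forall>i<length es. es ! i \<in> E \<and> ends (es ! i) = {vs ! i, vs ! Suc i}))"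

definition tree_embedding ::
  "'v set \<Rightarrow> 'e set \<Rightarrow> ('e \<Rightarrow> 'v set) \<Rightarrow> 'n set \<Rightarrow> 'f set \<Rightarrow> ('f \<Rightarrow> 'n set) \<Rightarrow>
   ('n \<Rightarrow> 'v) \<Rightarrow> ('f \<Rightarrow> 'e list) \<Rightarrow> bool" where
  "tree_embedding V E ends N TE tends M1 M2 \<longleftrightarrow>
     is_tree N TE tends \<and> (\<forall>a\<in>N. M1 a \<in> V) \<and>
     bij_betw M1 (leaves N TE tends) V \<and>
     (\<forall>f\<in>TE. \<exists>a b. tends f = {a, b} \<and> is_path E ends (M1 a) (M1 b) (M2 f))"

definition xt :: "'e set \<Rightarrow> nat \<Rightarrow> nat \<Rightarrow> real \<Rightarrow> ('e \<Rightarrow> real) \<Rightarrow> 'e \<Rightarrow> real" where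
  "xt H p q \<beta> x e = (if e \<in> H then 1 / (4 * real (p + q) * \<beta>) else x e)"

definition side ::
  "'n set \<Rightarrow> 'f set \<Rightarrow> ('f \<Rightarrow> 'n set) \<Rightarrow> ('n \<Rightarrow> 'v) \<Rightarrow> 'f \<Rightarrow> 'n \<Rightarrow> 'v set" where
  "side N TE tends M1 f u =
     M1 ` {a \<in> leaves N TE tends. (u, a) \<in> (adj (TE - {f}) tends)\<^sup>*}"

definition ycap ::
  "'e set \<Rightarrow> ('e \<Rightarrow> 'v set) \<Rightarrow> ('e \<Rightarrow> real) \<Rightarrow> 'n set \<Rightarrow> 'f set \<Rightarrow> ('f \<Rightarrow> 'n set) \<Rightarrow>
   ('n \<Rightarrow> 'v) \<Rightarrow> 'f \<Rightarrow> real" where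
  "ycap E ends xc N TE tends M1 f =
     sum xc (cut E ends (side N TE tends M1 f (SOME u. u \<in> tends f)))"

definition Minv :: "'f set \<Rightarrow> ('f \<Rightarrow> 'e list) \<Rightarrow> 'e set \<Rightarrow> 'f set" where
  "Minv TE M2 F = {f \<in> TE. set (M2 f) \<inter> F \<noteq> {}}"

definition shattered ::
  "'n set \<Rightarrow> 'f set \<Rightarrow> ('f \<Rightarrow> 'n set) \<Rightarrow> ('n \<Rightarrow> 'v) \<Rightarrow> ('f \<Rightarrow> 'e list) \<Rightarrow> 'e set \<Rightarrow>
   'v set \<Rightarrow> bool" where
  "shattered N TE tends M1 M2 F Q \<longleftrightarrow>
     \<not> (\<exists>c\<in>N. \<forall>a\<in>leaves N TE tends. M1 a \<in> Q \<longrightarrow>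
           (c, a) \<in> (adj (TE - Minv TE M2 F) tends)\<^sup>*)"

definition Z_F ::
  "'v set \<Rightarrow> 'e set \<Rightarrow> ('e \<Rightarrow> 'v set) \<Rightarrow> nat \<Rightarrow> (nat \<Rightarrow> 'v) \<Rightarrow> (nat \<Rightarrow> 'v) \<Rightarrow>
   'n set \<Rightarrow> 'f set \<Rightarrow> ('f \<Rightarrow> 'n set) \<Rightarrow> ('n \<Rightarrow> 'v) \<Rightarrow> ('f \<Rightarrow> 'e list) \<Rightarrow> 'e set \<Rightarrow>
   ('v set \<times> 'v set) set" where
  "Z_F V H ends k s t N TE tends M1 M2 F =
     {(\<Union>\<A> \<union> comp_of (H - F) ends (s i), \<Union>\<B> \<union> comp_of (H - F) ends (t i)) | \<A> \<B> i.
        i \<in> {1..k} \<and> \<A> \<inter> \<B> = {} \<and>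
        \<A> \<union> \<B> = {Q \<in> components V (H - F) ends. shattered N TE tends M1 M2 F Q}}"

end

theory Submission
  imports Defs
begin


lemma adj_sym: "sym (adj Es ends)"
  unfolding adj_def sym_def by (auto simp: insert_commute)

lemma adj_rt_sym: "(a,b) \<in> (adj Es ends)\<^sup>* \<Longrightarrow> (b,a) \<in> (adj Es ends)\<^sup>*"
  using sym_rtrancl[OF adj_sym] by (meson symD)

lemma adj_mono: "Es \<subseteq> Es' \<Longrightarrow> (adj Es ends)\<^sup>* \<subseteq> (adj Es' ends)\<^sup>*"
  apply (rule rtrancl_mono) unfolding adj_def by auto

lemma adj_edge: "e \<in> Es \<Longrightarrow> ends e = {u,w} \<Longrightarrow> (u,w) \<in> (adj Es ends)\<^sup>*"
  unfolding adj_def by auto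

lemma treeB:
  assumes T: "is_tree N TE tends" and f: "f \<in> TE" "tends f = {u,w}" and n: "n \<in> N"
  shows "(u,n) \<in> (adj (TE-{f}) tends)\<^sup>* \<or> (w,n) \<in> (adj (TE-{f}) tends)\<^sup>*"
proof -
  have "u \<in> N" using T f unfolding is_tree_def by auto
  then have "(u,n) \<in> (adj TE tends)\<^sup>*" using T n unfolding is_tree_def by auto
  then show ?thesis
  proof (induction rule: rtrancl_induct)
    case base then show ?case by auto
  next
    case (step m n')
    then obtain h where h: "h \<in> TE" "tends h = {m,n'}" unfolding adj_def by auto
    show ?case
    proof (cases "h = f")
      case True
      then have "n' = u \<or> n' = w" using h f by (metis doubleton_eq_iff insertE singletonD insertI1 insertI2)
      then show ?thesis by auto
    next
      case False
      then have "(m,n') \<in> adj (TE-{f}) tends" using h unfolding adj_def by auto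
      then show ?thesis using step.IH by (meson rtrancl.rtrancl_into_rtrancl)
    qed
  qed
qed

lemma card2_obtain:
  assumes "card X = 2" "c \<in> X" obtains c' where "X = {c,c'}" "c \<noteq> c'"
proof -
  obtain x y where "X = {x,y}" "x \<noteq> y" using assms(1) by (meson card_2_iff)
  then show ?thesis using that assms(2) by auto
qed

lemma tree_side:
  assumes T: "is_tree N TE tends" and f: "f \<in> TE" "c \<in> tends f" and ab: "a \<in> N" "b \<in> N"
    and nab: "(a,b) \<notin> (adj (TE-{f}) tends)\<^sup>*"
  shows "((c,a) \<in> (adj (TE-{f}) tends)\<^sup>*) \<noteq> ((c,b) \<in> (adj (TE-{f}) tends)\<^sup>*)"
proof -
  have "card (tends f) = 2" using T f unfolding is_tree_def by auto
  then obtain c' where c': "tends f = {c,c'}" using card2_obtain f(2) by metis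
  note B = treeB[OF T f(1) c']
  show ?thesis
  proof
    assume eq: "((c,a) \<in> (adj (TE-{f}) tends)\<^sup>*) = ((c,b) \<in> (adj (TE-{f}) tends)\<^sup>*)"
    show False
    proof (cases "(c,a) \<in> (adj (TE-{f}) tends)\<^sup>*")
      case True
      then have "(c,b) \<in> (adj (TE-{f}) tends)\<^sup>*" using eq by simp
      then show False using rtrancl_trans[OF adj_rt_sym[OF True]] nab by fast
    next
      case False
      then have "(c',a) \<in> (adj (TE-{f}) tends)\<^sup>*" "(c',b) \<in> (adj (TE-{f}) tends)\<^sup>*"
        using eq B[OF ab(1)] B[OF ab(2)] by auto
      then show False using rtrancl_trans[OF adj_rt_sym] nab by fast
    qed
  qed
qed

lemma decomp:
  assumes "(a,b) \<in> (adj (TE-Z) tends)\<^sup>*"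
  shows "(a,b) \<in> (adj (TE-Z-{f}) tends)\<^sup>* \<or>
    (\<exists>x1 x2. x1 \<in> tends f \<and> x2 \<in> tends f \<and> (a,x1) \<in> (adj (TE-Z-{f}) tends)\<^sup>* \<and>
        (x2,b) \<in> (adj (TE-Z-{f}) tends)\<^sup>*)"
  using assms
proof (induction rule: rtrancl_induct)
  case base then show ?case by auto
next
  case (step m n)
  then obtain h where h: "h \<in> TE - Z" "tends h = {m,n}" unfolding adj_def by auto
  show ?case
  proof (cases "h = f")
    case True
    then have mn: "m \<in> tends f" "n \<in> tends f" using h by auto
    from step.IH show ?thesis
    proof
      assume "(a, m) \<in> (adj (TE - Z - {f}) tends)\<^sup>*"
      then show ?thesis using mn by blast
    next
      assume "\<exists>x1 x2. x1 \<in> tends f \<and> x2 \<in> tends f \<and> (a,x1) \<in> (adj (TE-Z-{f}) tends)\<^sup>* \<and>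
        (x2,m) \<in> (adj (TE-Z-{f}) tends)\<^sup>*"
      then show ?thesis using mn by blast
    qed
  next
    case False
    then have e: "(m,n) \<in> adj (TE-Z-{f}) tends" using h unfolding adj_def by auto
    from step.IH show ?thesis
      using e by (meson rtrancl.rtrancl_into_rtrancl)
  qed
qed

lemma remove_step:
  assumes T: "is_tree N TE tends" and f: "f \<in> TE"
    and ab: "(a,b) \<in> (adj (TE-Z) tends)\<^sup>*" and abf: "(a,b) \<in> (adj (TE-{f}) tends)\<^sup>*"
  shows "(a,b) \<in> (adj (TE-Z-{f}) tends)\<^sup>*"
proof -
  let ?R = "(adj (TE-Z-{f}) tends)\<^sup>*"
  let ?Rf = "(adj (TE-{f}) tends)\<^sup>*"
  have mono: "?R \<subseteq> ?Rf" by (rule adj_mono) auto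
  show ?thesis
  using decomp[OF ab, of f]
  proof
    assume "\<exists>x1 x2. x1 \<in> tends f \<and> x2 \<in> tends f \<and> (a,x1) \<in> ?R \<and> (x2,b) \<in> ?R"
    then obtain x1 x2 where x: "x1 \<in> tends f" "x2 \<in> tends f" "(a,x1) \<in> ?R" "(x2,b) \<in> ?R" by blast
    show ?thesis
    proof (cases "x1 = x2")
      case True then show ?thesis using x by (metis rtrancl_trans)
    next
      case False
      have "card (tends f) = 2" using T f unfolding is_tree_def by auto
      then obtain c' where c': "tends f = {x1,c'}" using card2_obtain x(1) by metis
      then have tf: "tends f = {x1,x2}" using x(2) False by auto
      have "(x1,x2) \<notin> ?Rf" using T f tf unfolding is_tree_def by blast
      moreover have "(x1,a) \<in> ?Rf" using adj_rt_sym[OF subsetD[OF mono x(3)]] .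
      moreover have "(a,x2) \<in> ?Rf" using rtrancl_trans[OF abf adj_rt_sym[OF subsetD[OF mono x(4)]]] .
      ultimately show ?thesis using rtrancl_trans by fast
    qed
  qed
qed

lemma remove_set:
  assumes T: "is_tree N TE tends" and fin: "finite D"
    and D: "\<forall>f\<in>D. f \<in> TE \<and> (a,b) \<in> (adj (TE-{f}) tends)\<^sup>*"
    and ab: "(a,b) \<in> (adj (TE-X) tends)\<^sup>*"
  shows "(a,b) \<in> (adj (TE-X-D) tends)\<^sup>*"
  using fin D
proof (induction D rule: finite_induct)
  case empty then show ?case using ab by simp
next
  case (insert f D)
  have "(a,b) \<in> (adj (TE-(X \<union> D)) tends)\<^sup>*" using insert by (simp add: set_diff_eq)
  moreover have "TE - (X \<union> D) - {f} = TE - X - insert f D" by auto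
  moreover have "f \<in> TE" "(a,b) \<in> (adj (TE-{f}) tends)\<^sup>*" using insert.prems by auto
  ultimately show ?case using remove_step[OF T, where f=f and Z="X \<union> D" and a=a and b=b] by simp
qed

lemma stay_in:
  assumes "(a,b) \<in> (adj (TE - X - cut (TE-X) tends S) tends)\<^sup>*" "a \<in> S"
  shows "b \<in> S"
  using assms
proof (induction rule: rtrancl_induct)
  case base then show ?case .
next
  case (step m n)
  then obtain h where h: "h \<in> TE - X - cut (TE-X) tends S" "tends h = {m,n}" unfolding adj_def by auto
  show ?case
  proof (rule ccontr)
    assume "n \<notin> S"
    then have "h \<in> cut (TE-X) tends S" using h step unfolding cut_def by auto
    then show False using h by auto
  qed
qed

lemma sep_edge:
  assumes T: "is_tree N TE tends" and a: "a \<in> S" and b: "b \<notin> S"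
    and ab: "(a,b) \<in> (adj (TE-X) tends)\<^sup>*"
  shows "\<exists>f\<in>cut (TE-X) tends S. (a,b) \<notin> (adj (TE-{f}) tends)\<^sup>*"
proof (rule ccontr)
  assume H: "\<not> ?thesis"
  have fin: "finite (cut (TE-X) tends S)" using T unfolding is_tree_def cut_def by auto
  have D: "\<forall>f\<in>cut (TE-X) tends S. f \<in> TE \<and> (a,b) \<in> (adj (TE-{f}) tends)\<^sup>*"
    using H unfolding cut_def by auto
  have "b \<in> S" using stay_in[OF remove_set[OF T fin D ab] a] .
  then show False using b by simp
qed



lemma side_mem:
  assumes inj: "inj_on M1 (leaves N TE tends)" and a: "a \<in> leaves N TE tends"
  shows "M1 a \<in> side N TE tends M1 f c \<longleftrightarrow> (c,a) \<in> (adj (TE-{f}) tends)\<^sup>*"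
proof
  assume "M1 a \<in> side N TE tends M1 f c"
  then obtain a' where "a' \<in> leaves N TE tends" "(c,a') \<in> (adj (TE-{f}) tends)\<^sup>*" "M1 a = M1 a'"
    unfolding side_def by auto
  then show "(c,a) \<in> (adj (TE-{f}) tends)\<^sup>*" using inj a by (metis inj_onD)
next
  assume "(c,a) \<in> (adj (TE-{f}) tends)\<^sup>*"
  then show "M1 a \<in> side N TE tends M1 f c" unfolding side_def using a by auto
qed

lemma edge_lemma:
  assumes T: "is_tree N TE tends" and inj: "inj_on M1 (leaves N TE tends)"
    and a: "a \<in> leaves N TE tends" "a \<in> S" and b: "b \<in> leaves N TE tends" "b \<notin> S"
    and ab: "(a,b) \<in> (adj (TE-X) tends)\<^sup>*" and e: "e \<in> E" "ends e = {M1 a, M1 b}"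
  shows "\<exists>f\<in>cut (TE-X) tends S. e \<in> cut E ends (side N TE tends M1 f (SOME u. u \<in> tends f))"
proof -
  obtain f where f: "f \<in> cut (TE-X) tends S" "(a,b) \<notin> (adj (TE-{f}) tends)\<^sup>*"
    using sep_edge[OF T a(2) b(2) ab] by blast
  have fT: "f \<in> TE" using f(1) unfolding cut_def by auto
  have "card (tends f) = 2" using T fT unfolding is_tree_def by auto
  then have "tends f \<noteq> {}" by auto
  then have c: "(SOME u. u \<in> tends f) \<in> tends f" by (meson ex_in_conv someI_ex)
  have LN: "leaves N TE tends \<subseteq> N" unfolding leaves_def by auto
  have ne: "((SOME u. u \<in> tends f, a) \<in> (adj (TE-{f}) tends)\<^sup>*) \<noteq> ((SOME u. u \<in> tends f, b) \<in> (adj (TE-{f}) tends)\<^sup>*)"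
    using tree_side[OF T fT c] a b LN f(2) by blast
  have "(M1 a \<in> side N TE tends M1 f (SOME u. u \<in> tends f)) \<noteq> (M1 b \<in> side N TE tends M1 f (SOME u. u \<in> tends f))"
    using ne side_mem[OF inj a(1)] side_mem[OF inj b(1)] by simp
  then have "e \<in> cut E ends (side N TE tends M1 f (SOME u. u \<in> tends f))"
    using e unfolding cut_def by auto
  then show ?thesis using f(1) by blast
qed

lemma ends_pair:
  assumes "card X \<le> 2" "1 \<le> card X" "u \<in> X" "w \<in> X" "u \<noteq> w"
  shows "X = {u,w}"
proof -
  have "finite X" using assms(2) by (metis card.infinite not_one_le_zero)
  moreover have "{u,w} \<subseteq> X" using assms by auto
  moreover have "card X \<le> card {u,w}" using assms by auto
  ultimately show ?thesis by (metis card_seteq)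
qed

theorem lemma4p4:
  fixes V :: "'v set" and E :: "'e set" and ends :: "'e \<Rightarrow> 'v set"
    and Safe H F :: "'e set" and p q k :: nat and s t :: "nat \<Rightarrow> 'v"
    and \<beta> :: real and x :: "'e \<Rightarrow> real"
    and N :: "'n set" and TE :: "'f set" and tends :: "'f \<Rightarrow> 'n set"
    and M1 :: "'n \<Rightarrow> 'v" and M2 :: "'f \<Rightarrow> 'e list"
    and A B S :: "_ set"
  assumes "finite V" and "finite E"
    and "\<forall>e\<in>E. ends e \<subseteq> V \<and> 1 \<le> card (ends e) \<and> card (ends e) \<le> 2"
    and "Safe \<subseteq> E"
    and "p + q \<ge> 1"
    and "\<forall>i\<in>{1..k}. s i \<in> V \<and> t i \<in> V"
    and "H \<subseteq> E"
    and "\<forall>i\<in>{1..k}. flex_connected V H ends Safe p q (s i) (t i)"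
    and "\<beta> \<ge> 1"
    and "\<forall>e\<in>E - H. 0 \<le> x e \<and> x e \<le> 1"
    and "\<forall>S. violated V H ends Safe p q k s t S \<longrightarrow> sum x (cut (E - H) ends S) \<ge> 1"
    and "\<forall>e\<in>E - H. 0 < x e \<and> x e < 1 / (4 * real (p + q) * \<beta>)"
    \<comment> \<open>F is a violating edge set\<close>
    and "violating_edge_set V H ends Safe p q k s t F"
    \<comment> \<open>a tree embedding of (G, xt) good for F\<close>
    and "tree_embedding V E ends N TE tends M1 M2"
    and "sum (ycap E ends (xt H p q \<beta> x) N TE tends M1) (Minv TE M2 F) \<le> 1 / 2"
    and "(A, B) \<in> Z_F V H ends k s t N TE tends M1 M2 F"
    and "S \<subseteq> N"
    and "\<forall>a\<in>leaves N TE tends. M1 a \<in> A \<longrightarrow> a \<in> S"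
    and "\<forall>a\<in>leaves N TE tends. M1 a \<in> B \<longrightarrow> a \<notin> S"
  shows "sum (ycap E ends (xt H p q \<beta> x) N TE tends M1) (cut (TE - Minv TE M2 F) tends S)
           \<ge> 1 / (4 * real (p + q) * \<beta>)"
proof -
  define c where "c = 1 / (4 * real (p + q) * \<beta>)"
  define L where "L = leaves N TE tends"
  define Y where "Y = ycap E ends (xt H p q \<beta> x) N TE tends M1"
  define MF where "MF = Minv TE M2 F"
  define lf where "lf = inv_into L M1"
  define S' where "S' = M1 ` (L \<inter> S)"
  have T: "is_tree N TE tends" and bij: "bij_betw M1 L V"
    using assms(14) unfolding tree_embedding_def L_def by auto
  have inj: "inj_on M1 L" and img: "M1 ` L = V" using bij unfolding bij_betw_def by auto
  have finTE: "finite TE" using T unfolding is_tree_def by auto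
  have LN: "L \<subseteq> N" unfolding L_def leaves_def by auto
  have lfL: "lf v \<in> L" and lfM: "M1 (lf v) = v" if "v \<in> V" for v
    using that img unfolding lf_def by (auto intro: inv_into_into f_inv_into_f)
  have lfM1: "lf (M1 a) = a" if "a \<in> L" for a
    using inv_into_f_f[OF inj that] unfolding lf_def .
  have S'V: "S' \<subseteq> V" unfolding S'_def using img by auto
  have S'iff: "v \<in> S' \<longleftrightarrow> lf v \<in> S" if "v \<in> V" for v
  proof
    assume "v \<in> S'"
    then obtain a where "a \<in> L" "a \<in> S" "v = M1 a" unfolding S'_def by auto
    then show "lf v \<in> S" using lfM1 by simp
  next
    assume "lf v \<in> S"
    then show "v \<in> S'" unfolding S'_def using lfL[OF that] lfM[OF that] by (metis IntI image_eqI)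
  qed
  have cpos: "c > 0" unfolding c_def using assms(5) assms(9) by auto
  have c4: "c \<le> 1/2"
  proof -
    have pq: "1 \<le> real (p + q)" using assms(5) by simp
    have "1 * 1 \<le> real (p + q) * \<beta>" by (rule mult_mono) (use pq assms(9) in auto)
    then have "4 * 1 \<le> 4 * (real (p + q) * \<beta>)" by (intro mult_left_mono) auto
    then have "4 \<le> 4 * real (p + q) * \<beta>" by (simp only: mult.assoc mult_1_right)
    then have h4: "4 \<le> 4 * real (p + q) * \<beta>" .
    then have pos: "0 < 4 * real (p + q) * \<beta>" by linarith
    have "1 / (4 * real (p + q) * \<beta>) \<le> 1/4" using pos h4 by (simp add: divide_simps)
    then have "c \<le> 1/4" unfolding c_def .
    then show ?thesis by simp
  qed
  have xtnn: "xt H p q \<beta> x e \<ge> 0" if "e \<in> E" for e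
    using that assms(10) cpos unfolding xt_def c_def by auto
  have finE: "finite E" by (rule assms(2))
  have Ynn: "Y f \<ge> 0" for f
    unfolding Y_def ycap_def by (rule sum_nonneg) (use xtnn in \<open>auto simp: cut_def\<close>)
  have Yge: "Y f \<ge> sum (xt H p q \<beta> x) D" if "D \<subseteq> cut E ends (side N TE tends M1 f (SOME u. u \<in> tends f))" for f D
    unfolding Y_def ycap_def
    by (rule sum_mono2) (use that finE xtnn in \<open>auto simp: cut_def intro: finite_subset\<close>)
  obtain \<A> \<B> i where ABi: "A = \<Union>\<A> \<union> comp_of (H - F) ends (s i)" "B = \<Union>\<B> \<union> comp_of (H - F) ends (t i)"
     "i \<in> {1..k}" "\<A> \<inter> \<B> = {}"
     "\<A> \<union> \<B> = {Q \<in> components V (H - F) ends. shattered N TE tends M1 M2 F Q}"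
    using assms(16) unfolding Z_F_def by blast
  have inA: "a \<in> S" if "a \<in> L" "M1 a \<in> A" for a using assms(18) that unfolding L_def by blast
  have inB: "a \<notin> S" if "a \<in> L" "M1 a \<in> B" for a using assms(19) that unfolding L_def by blast
  have finC: "finite (cut (TE - MF) tends S)" using finTE unfolding cut_def by auto
  show ?thesis
  proof (cases "cut H ends S' \<subseteq> F")
    case False
    then obtain e where e: "e \<in> cut H ends S'" "e \<notin> F" by auto
    then obtain u w where uw: "u \<in> ends e" "u \<in> S'" "w \<in> ends e" "w \<notin> S'" unfolding cut_def by auto
    have eE: "e \<in> E" using e(1) assms(7) unfolding cut_def by auto
    have ends: "ends e = {u,w}" using ends_pair[of "ends e" u w] assms(3) eE uw by auto
    have uV: "u \<in> V" and wV: "w \<in> V" using assms(3) eE uw by auto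
    define a where "a = lf u"
    define b where "b = lf w"
    have a: "a \<in> L" "a \<in> S" "M1 a = u" using lfL[OF uV] lfM[OF uV] S'iff[OF uV] uw unfolding a_def by auto
    have b: "b \<in> L" "b \<notin> S" "M1 b = w" using lfL[OF wV] lfM[OF wV] S'iff[OF wV] uw unfolding b_def by auto
    define Q where "Q = comp_of (H - F) ends u"
    have QC: "Q \<in> components V (H - F) ends" unfolding Q_def components_def using uV by auto
    have uQ: "u \<in> Q" unfolding Q_def comp_of_def by auto
    have wQ: "w \<in> Q" unfolding Q_def comp_of_def using adj_edge[of e "H - F" ends u w] e ends
      unfolding cut_def by auto
    show ?thesis
    proof (cases "shattered N TE tends M1 M2 F Q")
      case True
      then have "Q \<in> \<A> \<or> Q \<in> \<B>" using ABi(5) QC by blast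
      then show ?thesis
      proof
        assume "Q \<in> \<A>"
        then have "w \<in> A" using ABi(1) wQ by auto
        then have "b \<in> S" using inA b by auto
        then show ?thesis using b by auto
      next
        assume "Q \<in> \<B>"
        then have "u \<in> B" using ABi(2) uQ by auto
        then have "a \<notin> S" using inB a by auto
        then show ?thesis using a by auto
      qed
    next
      case False
      then obtain r where r: "r \<in> N" "\<forall>a\<in>L. M1 a \<in> Q \<longrightarrow> (r, a) \<in> (adj (TE - MF) tends)\<^sup>*"
        unfolding shattered_def L_def MF_def by blast
      have "(r,a) \<in> (adj (TE - MF) tends)\<^sup>*" "(r,b) \<in> (adj (TE - MF) tends)\<^sup>*"
        using r(2) a b uQ wQ by auto
      then have ab: "(a,b) \<in> (adj (TE - MF) tends)\<^sup>*" using adj_rt_sym rtrancl_trans by fast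
      obtain f where f: "f \<in> cut (TE - MF) tends S"
         "e \<in> cut E ends (side N TE tends M1 f (SOME u. u \<in> tends f))"
        using edge_lemma[OF T inj[unfolded L_def] a(1,2)[unfolded L_def] b(1,2)[unfolded L_def] ab eE]
          ends a(3) b(3) by auto
      have "c = xt H p q \<beta> x e" unfolding xt_def c_def using e(1) unfolding cut_def by auto
      also have "\<dots> = sum (xt H p q \<beta> x) {e}" by simp
      also have "\<dots> \<le> Y f" using Yge[of "{e}" f] f(2) by simp
      also have "\<dots> \<le> sum Y (cut (TE - MF) tends S)"
        by (rule member_le_sum) (use f(1) finC Ynn in auto)
      finally show ?thesis unfolding c_def Y_def MF_def .
    qed
  next
    case True
    have siV: "s i \<in> V" and tiV: "t i \<in> V" using assms(6) ABi(3) by auto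
    have "s i \<in> A" unfolding ABi(1) comp_of_def by auto
    then have "s i \<in> S'" using S'iff[OF siV] inA lfL[OF siV] lfM[OF siV] by auto
    moreover have "t i \<in> B" unfolding ABi(2) comp_of_def by auto
    then have "t i \<notin> S'" using S'iff[OF tiV] inB lfL[OF tiV] lfM[OF tiV] by auto
    ultimately have sep: "separates S' (s i) (t i)" unfolding separates_def by auto
    have flex: "card (cut H ends S' \<inter> Safe) \<ge> p \<or> card (cut H ends S') \<ge> p + q"
      using assms(8) ABi(3) S'V sep unfolding flex_connected_def by blast
    obtain S0 where S0: "violated V H ends Safe p q k s t S0" "F = cut H ends S0"
      using assms(13) unfolding violating_edge_set_def by blast
    have cF: "card F = p + q" "card (F \<inter> Safe) < p" using S0 unfolding violated_def by auto
    have finF: "finite F" using S0(2) assms(7) finE unfolding cut_def by (auto intro: finite_subset)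
    have "card (cut H ends S' \<inter> Safe) \<le> card (F \<inter> Safe)"
      by (rule card_mono) (use finF True in auto)
    then have csafe: "card (cut H ends S' \<inter> Safe) < p" using cF by auto
    then have "card (cut H ends S') \<ge> p + q" using flex by auto
    then have eqF: "cut H ends S' = F" using card_seteq[OF finF True] cF by auto
    have "violated V H ends Safe p q k s t S'"
      unfolding violated_def using S'V sep ABi(3) eqF cF csafe by auto
    then have one: "sum x (cut (E - H) ends S') \<ge> 1" using assms(11) by blast
    define C where "C = cut (E - H) ends S'"
    have finCC: "finite C" unfolding C_def cut_def using finE by auto
    have exf: "\<exists>f. f \<in> cut TE tends S \<and> e \<in> cut E ends (side N TE tends M1 f (SOME u. u \<in> tends f))"
      if eC: "e \<in> C" for e
    proof -
      obtain u w where uw: "u \<in> ends e" "u \<in> S'" "w \<in> ends e" "w \<notin> S'" using eC unfolding C_def cut_def by auto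
      have eE: "e \<in> E" using eC unfolding C_def cut_def by auto
      have ends: "ends e = {u,w}" using ends_pair[of "ends e" u w] assms(3) eE uw by auto
      have uV: "u \<in> V" and wV: "w \<in> V" using assms(3) eE uw by auto
      define a where "a = lf u"
      define b where "b = lf w"
      have a: "a \<in> L" "a \<in> S" "M1 a = u" using lfL[OF uV] lfM[OF uV] S'iff[OF uV] uw unfolding a_def by auto
      have b: "b \<in> L" "b \<notin> S" "M1 b = w" using lfL[OF wV] lfM[OF wV] S'iff[OF wV] uw unfolding b_def by auto
      have "(a,b) \<in> (adj TE tends)\<^sup>*" using T a(1) b(1) LN unfolding is_tree_def by blast
      then have ab: "(a,b) \<in> (adj (TE - {}) tends)\<^sup>*" by simp
      show ?thesis
        using edge_lemma[OF T inj[unfolded L_def] a(1,2)[unfolded L_def] b(1,2)[unfolded L_def] ab eE]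
          ends a(3) b(3) by auto
    qed
    define g where "g = (\<lambda>e. SOME f. f \<in> cut TE tends S \<and> e \<in> cut E ends (side N TE tends M1 f (SOME u. u \<in> tends f)))"
    have g: "g e \<in> cut TE tends S" "e \<in> cut E ends (side N TE tends M1 (g e) (SOME u. u \<in> tends (g e)))"
      if "e \<in> C" for e
      using someI_ex[OF exf[OF that]] unfolding g_def by auto
    have "sum x C = sum (xt H p q \<beta> x) C"
      by (rule sum.cong) (auto simp: xt_def C_def cut_def)
    also have "\<dots> = sum (\<lambda>f. sum (xt H p q \<beta> x) {e \<in> C. g e = f}) (g ` C)"
      by (rule sum.image_gen[OF finCC])
    also have "\<dots> \<le> sum Y (g ` C)"
      by (rule sum_mono, rule Yge) (use g in \<open>auto simp del: cut_def\<close>, metis g(2))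
    also have "\<dots> \<le> sum Y (cut TE tends S)"
      by (rule sum_mono2) (use finTE g Ynn in \<open>auto simp: cut_def\<close>)
    also have "cut TE tends S = cut (TE - MF) tends S \<union> (cut TE tends S \<inter> MF)"
      unfolding cut_def by auto
    also have "sum Y \<dots> = sum Y (cut (TE - MF) tends S) + sum Y (cut TE tends S \<inter> MF)"
      by (rule sum.union_disjoint) (use finTE in \<open>auto simp: cut_def\<close>)
    also have "sum Y (cut TE tends S \<inter> MF) \<le> sum Y MF"
      by (rule sum_mono2) (use finTE Ynn in \<open>auto simp: MF_def Minv_def\<close>)
    also have "sum Y MF \<le> 1/2" using assms(15) unfolding Y_def MF_def .
    finally have "sum x C \<le> sum Y (cut (TE - MF) tends S) + 1/2" by simp
    then have "sum Y (cut (TE - MF) tends S) \<ge> 1/2" using one unfolding C_def by simp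
    then show ?thesis using c4 unfolding c_def Y_def MF_def by simp
  qed
qed

end
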